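(* Let $Z\in\mathbb{R}^{N\times k}$ have rows $\mathbf{z}_1^\top,\dots,\mathbf{z}_N^\top$ and let $\Pi=\{\pi_1,\dots,\pi_C\}$ be a partition of $[N]$ into $C\ge 2$ nonempty classes. For $\pi\in\Pi$ let $\boldsymbol{\mu}_\pi=\frac{1}{|\pi|}\sum_{i\in\pi}\mathbf{z}_i$ and $\boldsymbol{\mu}_\Pi=\frac1N\sum_{j=1}^N\mathbf{z}_j$, and define $$\mathcal{M}_{kms}(\Pi,Z)=\frac{\sum_{\pi\in\Pi}\sum_{i\in\pi}\|\mathbf{z}_i-\boldsymbol{\mu}_\pi\|^2}{\sum_{\pi\in\Pi}|\pi|\,\|\boldsymbol{\mu}_\pi-\boldsymbol{\mu}_\Pi\|^2}.$$ For distinct $\pi,\pi'\in\Pi$ let $\xi_{\pi\to\pi'}=\{i\in\pi:\|\mathbf{z}_i-\boldsymbol{\mu}_\pi\|_2\ge\|\mathbf{z}_i-\boldsymbol{\mu}_{\pi'}\|_2\}$ and assume $|\xi_{\pi\to\pi'}|>0$ for all such pairs. Define $\mathcal{E}_{\pi\to\pi'}=\frac{|\xi_{\pi\to\pi'}|}{|\pi'|+|\pi|}$ and $$\mathcal{E}_{\Pi,Z}=C(C-1)\Big/\sum_{\pi\ne\pi',\ \pi,\pi'\in\Pi}\frac{1}{\mathcal{E}_{\pi\to\pi'}}.$$ Then $\mathcal{E}_{\Pi,Z}=O(\mathcal{M}_{kms}(\Pi,Z))$.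
   Context: $\mathcal{E}_{\Pi,Z}$ is the harmonic mean of the pairwise clustering error ratios; $\mathcal{M}_{kms}$ is the ratio of the intra-class measure to the inter-class measure (assumed nonzero). The implied constant in $O(\cdot)$ depends only on $C$. *)

theory Defs
  imports Complex_Main "HOL-Library.Disjoint_Sets"
begin

text \<open>Points of R^k are represented as functions nat => real, only coordinates j < k
  matter. The data matrix Z is z :: nat => nat => real, row i is z i (for i < N).
  Indices of [N] are {..<N}.\<close>

definition sqnorm :: "nat \<Rightarrow> (nat \<Rightarrow> real) \<Rightarrow> real" where
  "sqnorm k x = (\<Sum>j<k. (x j)^2)"

definition enorm :: "nat \<Rightarrow> (nat \<Rightarrow> real) \<Rightarrow> real" where
  "enorm k x = sqrt (sqnorm k x)"

definition class_mean :: "(nat \<Rightarrow> nat \<Rightarrow> real) \<Rightarrow> nat set \<Rightarrow> nat \<Rightarrow> real" where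
  "class_mean z p = (\<lambda>j. (\<Sum>i\<in>p. z i j) / real (card p))"

definition global_mean :: "nat \<Rightarrow> (nat \<Rightarrow> nat \<Rightarrow> real) \<Rightarrow> nat \<Rightarrow> real" where
  "global_mean N z = (\<lambda>j. (\<Sum>i<N. z i j) / real N)"

definition intra_kms :: "nat \<Rightarrow> nat set set \<Rightarrow> (nat \<Rightarrow> nat \<Rightarrow> real) \<Rightarrow> real" where
  "intra_kms k P z = (\<Sum>p\<in>P. \<Sum>i\<in>p. sqnorm k (\<lambda>j. z i j - class_mean z p j))"

definition inter_kms :: "nat \<Rightarrow> nat \<Rightarrow> nat set set \<Rightarrow> (nat \<Rightarrow> nat \<Rightarrow> real) \<Rightarrow> real" where
  "inter_kms k N P z =
     (\<Sum>p\<in>P. real (card p) * sqnorm k (\<lambda>j. class_mean z p j - global_mean N z j))"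

definition M_kms :: "nat \<Rightarrow> nat \<Rightarrow> nat set set \<Rightarrow> (nat \<Rightarrow> nat \<Rightarrow> real) \<Rightarrow> real" where
  "M_kms k N P z = intra_kms k P z / inter_kms k N P z"

definition xi :: "nat \<Rightarrow> (nat \<Rightarrow> nat \<Rightarrow> real) \<Rightarrow> nat set \<Rightarrow> nat set \<Rightarrow> nat set" where
  "xi k z p p' = {i \<in> p. enorm k (\<lambda>j. z i j - class_mean z p j)
                         \<ge> enorm k (\<lambda>j. z i j - class_mean z p' j)}"

definition E_pair :: "nat \<Rightarrow> (nat \<Rightarrow> nat \<Rightarrow> real) \<Rightarrow> nat set \<Rightarrow> nat set \<Rightarrow> real" where
  "E_pair k z p p' = real (card (xi k z p p')) / (real (card p') + real (card p))"

definition E_Pi :: "nat \<Rightarrow> nat set set \<Rightarrow> (nat \<Rightarrow> nat \<Rightarrow> real) \<Rightarrow> real" where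
  "E_Pi k P z = real (card P) * (real (card P) - 1) /
     (\<Sum>(p, p')\<in>{(a, b). a \<in> P \<and> b \<in> P \<and> a \<noteq> b}. 1 / E_pair k z p p')"

end

theory Submission
  imports Defs "HOL-Analysis.L2_Norm"
begin

lemma sq_jensen:
  fixes w x :: "'a \<Rightarrow> real"
  assumes "finite Q" "\<And>q. q \<in> Q \<Longrightarrow> w q \<ge> 0" "(\<Sum>q\<in>Q. w q) = 1"
  shows "(\<Sum>q\<in>Q. w q * x q)^2 \<le> (\<Sum>q\<in>Q. w q * (x q)^2)"
proof -
  define m where "m = (\<Sum>q\<in>Q. w q * x q)"
  have "0 \<le> (\<Sum>q\<in>Q. w q * (x q - m)^2)"
    using assms(2) by (intro sum_nonneg) simp
  also have "(\<Sum>q\<in>Q. w q * (x q - m)^2)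
      = (\<Sum>q\<in>Q. w q * (x q)^2) - 2 * m * (\<Sum>q\<in>Q. w q * x q) + m^2 * (\<Sum>q\<in>Q. w q)"
    by (simp add: power2_eq_square algebra_simps sum.distrib sum_subtractf sum_distrib_left)
  finally show ?thesis using assms(3) unfolding m_def by (simp add: power2_eq_square)
qed

lemma sqnorm_nonneg: "sqnorm k x \<ge> 0"
  unfolding sqnorm_def by (intro sum_nonneg) simp

lemma enorm_L2: "enorm k x = L2_set x {..<k}"
  unfolding enorm_def sqnorm_def L2_set_def by simp

lemma sqnorm_enorm: "sqnorm k x = (enorm k x)^2"
  unfolding enorm_def using sqnorm_nonneg by simp

lemma dist_bound:
  assumes "enorm k (\<lambda>j. a j - b j) \<ge> enorm k (\<lambda>j. a j - c j)"
  shows "sqnorm k (\<lambda>j. b j - c j) \<le> 4 * sqnorm k (\<lambda>j. a j - b j)"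
proof -
  have "enorm k (\<lambda>j. b j - c j) = L2_set (\<lambda>j. (b j - a j) + (a j - c j)) {..<k}"
    unfolding enorm_L2 by simp
  also have "\<dots> \<le> L2_set (\<lambda>j. b j - a j) {..<k} + L2_set (\<lambda>j. a j - c j) {..<k}"
    by (rule L2_set_triangle_ineq)
  also have "L2_set (\<lambda>j. b j - a j) {..<k} = enorm k (\<lambda>j. a j - b j)"
    unfolding enorm_L2 L2_set_def by (simp add: power2_commute)
  finally have "enorm k (\<lambda>j. b j - c j) \<le> 2 * enorm k (\<lambda>j. a j - b j)"
    using assms unfolding enorm_L2 by simp
  moreover have "enorm k (\<lambda>j. b j - c j) \<ge> 0" unfolding enorm_def using sqnorm_nonneg by simp
  ultimately have "(enorm k (\<lambda>j. b j - c j))^2 \<le> (2 * enorm k (\<lambda>j. a j - b j))^2"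
    by (intro power_mono) auto
  thus ?thesis unfolding sqnorm_enorm by (simp add: power_mult_distrib)
qed


lemma main_bound:
  fixes P :: "nat set set" and z :: "nat \<Rightarrow> nat \<Rightarrow> real"
  assumes part: "partition_on {..<N} P" and CP: "card P \<ge> 2"
    and xipos: "\<forall>p\<in>P. \<forall>p'\<in>P. p \<noteq> p' \<longrightarrow> card (xi k z p p') > 0"
    and inz: "inter_kms k N P z \<noteq> 0"
  shows "E_Pi k P z \<le> (4 * real (card P) * (real (card P) - 1)) * M_kms k N P z"
proof -
  define mu where "mu = (\<lambda>p. class_mean z p)"
  define g where "g = global_mean N z"
  define D where "D = (\<lambda>p q. sqnorm k (\<lambda>j. mu p j - mu q j))"
  define S where "S = {(a, b). a \<in> P \<and> b \<in> P \<and> a \<noteq> b}"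
  define intra where "intra = intra_kms k P z"
  define inter where "inter = inter_kms k N P z"
  have finP: "finite P" using CP by (metis card.infinite not_numeral_le_zero)
  have U: "\<Union>P = {..<N}" and dj: "disjoint P" and ne0: "{} \<notin> P"
    using part unfolding partition_on_def by auto
  have sub: "p \<subseteq> {..<N}" if "p \<in> P" for p using U that by auto
  have finp: "finite p" if "p \<in> P" for p using sub[OF that] finite_subset by blast
  have cpos: "card p > 0" if "p \<in> P" for p using that ne0 finp[OF that]
    by (metis card_gt_0_iff)
  have cle: "card p \<le> N" if "p \<in> P" for p
    using card_mono[OF _ sub[OF that]] by simp
  obtain p0 where "p0 \<in> P" using CP by fastforce
  hence Npos: "N > 0" using cpos cle by (meson order_less_le_trans)
  have "card (\<Union>P) = sum card P"
    by (rule card_Union_disjoint) (use dj finp in auto)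
  hence Nsum: "real N = (\<Sum>q\<in>P. real (card q))" using U by simp
  define w where "w = (\<lambda>q::nat set. real (card q) / real N)"
  have wnn: "w q \<ge> 0" for q unfolding w_def by simp
  have wsum: "(\<Sum>q\<in>P. w q) = 1"
    unfolding w_def using Npos by (simp add: sum_divide_distrib[symmetric] Nsum[symmetric])
  have gm: "g j = (\<Sum>q\<in>P. w q * mu q j)" for j
  proof -
    have "(\<Sum>i<N. z i j) = (\<Sum>q\<in>P. \<Sum>i\<in>q. z i j)"
      unfolding U[symmetric]
      using dj finp by (subst sum.Union_disjoint) (auto simp: disjoint_def disjnt_def)
    also have "\<dots> = (\<Sum>q\<in>P. real (card q) * mu q j)"
      using cpos by (intro sum.cong) (auto simp: mu_def class_mean_def)
    finally show ?thesis unfolding g_def global_mean_def w_def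
      by (simp add: sum_divide_distrib)
  qed
  have key1: "sqnorm k (\<lambda>j. mu p j - g j) \<le> (\<Sum>q\<in>P. w q * D p q)" if "p \<in> P" for p
  proof -
    have eq: "mu p j - g j = (\<Sum>q\<in>P. w q * (mu p j - mu q j))" for j
      unfolding gm by (simp add: algebra_simps sum_subtractf sum_distrib_right[symmetric] wsum)
    have "sqnorm k (\<lambda>j. mu p j - g j) = (\<Sum>j<k. (\<Sum>q\<in>P. w q * (mu p j - mu q j))^2)"
      unfolding sqnorm_def eq ..
    also have "\<dots> \<le> (\<Sum>j<k. \<Sum>q\<in>P. w q * (mu p j - mu q j)^2)"
      by (intro sum_mono sq_jensen finP wnn wsum)
    also have "\<dots> = (\<Sum>q\<in>P. w q * D p q)"
      unfolding D_def sqnorm_def by (subst sum.swap) (simp add: sum_distrib_left)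
    finally show ?thesis .
  qed
  have "inter \<le> (\<Sum>p\<in>P. real (card p) * (\<Sum>q\<in>P. w q * D p q))"
    unfolding inter_def inter_kms_def
    using key1 by (intro sum_mono mult_left_mono) (auto simp: mu_def g_def)
  also have "\<dots> = (\<Sum>(p,q)\<in>P \<times> P. real (card p) * real (card q) * D p q) / real N"
    by (simp add: sum.cartesian_product[symmetric] sum_distrib_left sum_divide_distrib w_def
        algebra_simps)
  also have "(\<Sum>(p,q)\<in>P \<times> P. real (card p) * real (card q) * D p q)
      = (\<Sum>(p,q)\<in>S. real (card p) * real (card q) * D p q)"
    by (rule sum.mono_neutral_right) (auto simp: S_def D_def sqnorm_def finP)
  finally have inter_le: "inter \<le> (\<Sum>(p,q)\<in>S. real (card p) * real (card q) * D p q) / real N" .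
  have intra_nn: "intra \<ge> 0" unfolding intra_def intra_kms_def
    by (intro sum_nonneg sqnorm_nonneg)
  have Epos: "E_pair k z p q > 0" if "(p,q) \<in> S" for p q
  proof -
    have "p \<in> P" "q \<in> P" "p \<noteq> q" using that by (auto simp: S_def)
    hence "card (xi k z p q) > 0" "card p > 0" "card q > 0" using xipos cpos by auto
    thus ?thesis unfolding E_pair_def by (intro divide_pos_pos) auto
  qed
  have key2: "real (card p) * real (card q) * D p q \<le> 4 * real N * intra / E_pair k z p q"
    if "(p,q) \<in> S" for p q
  proof -
    have pP: "p \<in> P" and qP: "q \<in> P" and pq: "p \<noteq> q" using that by (auto simp: S_def)
    define X where "X = xi k z p q"
    have Xsub: "X \<subseteq> p" unfolding X_def xi_def by auto
    have Xpos: "card X > 0" using xipos pP qP pq X_def by auto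
    have "real (card X) * D p q = (\<Sum>i\<in>X. D p q)" by simp
    also have "\<dots> \<le> (\<Sum>i\<in>X. 4 * sqnorm k (\<lambda>j. z i j - class_mean z p j))"
      unfolding D_def mu_def
      by (intro sum_mono dist_bound) (auto simp: X_def xi_def)
    also have "\<dots> \<le> (\<Sum>i\<in>p. 4 * sqnorm k (\<lambda>j. z i j - class_mean z p j))"
      using Xsub finp[OF pP] by (intro sum_mono2) (auto intro: sqnorm_nonneg)
    also have "\<dots> = 4 * (\<Sum>i\<in>p. sqnorm k (\<lambda>j. z i j - class_mean z p j))"
      by (simp add: sum_distrib_left)
    also have "(\<Sum>i\<in>p. sqnorm k (\<lambda>j. z i j - class_mean z p j)) \<le> intra"
      unfolding intra_def intra_kms_def
      using pP finP by (intro member_le_sum) (auto intro: sum_nonneg sqnorm_nonneg)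
    finally have A: "real (card X) * D p q \<le> 4 * intra" by simp
    have B: "real (card p) * real (card q) \<le> real N * (real (card p) + real (card q))"
    proof -
      have "real (card p) * real (card q) \<le> real (card p) * real N"
        using cle[OF qP] by (intro mult_left_mono) auto
      also have "\<dots> \<le> real N * (real (card p) + real (card q))" by (simp add: algebra_simps)
      finally show ?thesis .
    qed
    have Dnn: "D p q \<ge> 0" unfolding D_def by (rule sqnorm_nonneg)
    have "real (card p) * real (card q) * D p q * real (card X)
        = real (card p) * real (card q) * (real (card X) * D p q)" by simp
    also have "\<dots> \<le> real (card p) * real (card q) * (4 * intra)"
      using A by (intro mult_left_mono) auto
    also have "\<dots> \<le> real N * (real (card p) + real (card q)) * (4 * intra)"
      using B intra_nn by (intro mult_right_mono) auto
    finally have C: "real (card p) * real (card q) * D p q * real (card X)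
        \<le> real N * (real (card p) + real (card q)) * (4 * intra)" .
    show ?thesis unfolding E_pair_def X_def[symmetric]
      using C Xpos cpos[OF pP] cpos[OF qP] by (simp add: field_simps)
  qed
  define T where "T = (\<Sum>(p, q)\<in>S. 1 / E_pair k z p q)"
  have finS: "finite S" unfolding S_def
    by (rule finite_subset[of _ "P \<times> P"]) (auto simp: finP)
  obtain a b where ab: "a \<in> P" "b \<in> P" "a \<noteq> b" using CP
  proof -
    have "\<not> card P \<le> Suc 0" using CP by simp
    thus ?thesis using card_le_Suc0_iff_eq[OF finP] that by blast
  qed
  have "(a,b) \<in> S" using ab by (simp add: S_def)
  have Tpos: "T > 0" unfolding T_def
  proof (rule sum_pos2[OF finS \<open>(a,b) \<in> S\<close>])
    show "0 < (case (a, b) of (p, q) \<Rightarrow> 1 / E_pair k z p q)" using Epos[OF \<open>(a,b) \<in> S\<close>] by simp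
    show "\<And>i. i \<in> S \<Longrightarrow> 0 \<le> (case i of (p, q) \<Rightarrow> 1 / E_pair k z p q)"
      using Epos by (auto simp: less_imp_le)
  qed
  have "(\<Sum>(p,q)\<in>S. real (card p) * real (card q) * D p q)
      \<le> (\<Sum>(p,q)\<in>S. 4 * real N * intra * (1 / E_pair k z p q))"
    using key2 by (intro sum_mono) auto
  also have "\<dots> = 4 * real N * intra * T" unfolding T_def
    by (simp add: sum_distrib_left case_prod_unfold)
  finally have SS: "(\<Sum>(p,q)\<in>S. real (card p) * real (card q) * D p q) \<le> 4 * real N * intra * T" .
  have "inter * real N \<le> (\<Sum>(p,q)\<in>S. real (card p) * real (card q) * D p q)"
    using inter_le Npos by (simp add: pos_le_divide_eq)
  with SS have "inter * real N \<le> (4 * intra * T) * real N" by (simp add: algebra_simps)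
  hence "inter \<le> 4 * intra * T" using Npos by simp
  have inter_nn: "inter \<ge> 0" unfolding inter_def inter_kms_def
    by (intro sum_nonneg mult_nonneg_nonneg sqnorm_nonneg) auto
  hence inter_pos: "inter > 0" using inz inter_def by auto
  have cc: "real (card P) * (real (card P) - 1) \<ge> 0" using CP by simp
  have "E_Pi k P z = real (card P) * (real (card P) - 1) / T"
    unfolding E_Pi_def T_def S_def ..
  also have "\<dots> \<le> (4 * real (card P) * (real (card P) - 1)) * (intra / inter)"
  proof -
    have "1 / T \<le> 4 * (intra / inter)"
      using \<open>inter \<le> 4 * intra * T\<close> Tpos inter_pos by (simp add: divide_simps mult.commute)
    from mult_left_mono[OF this cc] show ?thesis by (simp add: mult_ac)
  qed
  finally show ?thesis unfolding M_kms_def intra_def inter_def .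
qed

theorem theorem2:
  fixes C :: nat
  assumes "C \<ge> 2"
  shows "\<exists>K>0. \<forall>(N::nat) (k::nat) (z::nat \<Rightarrow> nat \<Rightarrow> real) (P::nat set set).
           partition_on {..<N} P \<and> card P = C
           \<and> (\<forall>p\<in>P. \<forall>p'\<in>P. p \<noteq> p' \<longrightarrow> card (xi k z p p') > 0)
           \<and> inter_kms k N P z \<noteq> 0
           \<longrightarrow> E_Pi k P z \<le> K * M_kms k N P z"
proof (intro exI[of _ "4 * real C * (real C - 1)"] conjI allI impI)
  show "0 < 4 * real C * (real C - 1)" using assms by simp
  fix N k z P
  assume H: "partition_on {..<N} P \<and> card P = C
           \<and> (\<forall>p\<in>P. \<forall>p'\<in>P. p \<noteq> p' \<longrightarrow> card (xi k z p p') > 0)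
           \<and> inter_kms k N P z \<noteq> 0"
  then show "E_Pi k P z \<le> 4 * real C * (real C - 1) * M_kms k N P z"
    using main_bound[of N P k z] assms by auto
qed

end
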